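(* Let $p$ be a prime. Then $\mathcal{M}_p^{(0)}=\{n\in\{1,2,6,42,1806\} : p\equiv 1\pmod{n}\}$.
   Context: For positive integers $k,n$ let $S_k(n)=\sum_{i=1}^{n} i^k$. For an integer $a$, $\mathcal{M}_a$ denotes the set of positive integers $n$ such that $S_n(n)\equiv a\pmod{n}$ (it is known that $\mathcal{M}_1=\{1,2,6,42,1806\}$). For a prime $p$, $\mathcal{M}_p^{(0)}=\{n\in\mathcal{M}_p : p\nmid n\}$. *)

theory Defs
  imports "HOL-Number_Theory.Number_Theory"
begin

definition S :: "nat \<Rightarrow> nat \<Rightarrow> int" where
  "S k n = (\<Sum>i = 1..n. int i ^ k)"

definition M :: "int \<Rightarrow> nat set" where
  "M a = {n. n > 0 \<and> [S n n = a] (mod int n)}"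

definition M0 :: "nat \<Rightarrow> nat set" where
  "M0 p = {n \<in> M (int p). \<not> p dvd n}"

end

theory Submission
  imports Defs
begin

lemma block_sum:
  fixes m q k :: nat
  shows "[(\<Sum>i<m*q. int i ^ k) = int m * (\<Sum>j<q. int j ^ k)] (mod int q)"
proof -
  have "(\<Sum>i<m*q. int i ^ k) = (\<Sum>a<m. \<Sum>i\<in>{a*q..<a*q+q}. int i ^ k)"
    by (rule sum.nat_group[symmetric])
  also have "\<dots> = (\<Sum>a<m. \<Sum>j<q. int (j + a*q) ^ k)"
  proof (rule sum.cong[OF refl])
    fix a show "(\<Sum>i\<in>{a*q..<a*q+q}. int i ^ k) = (\<Sum>j<q. int (j + a*q) ^ k)"
      using sum.shift_bounds_nat_ivl[of "\<lambda>i. int i ^ k" 0 "a*q" q]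
      by (simp add: atLeast0LessThan add.commute)
  qed
  finally have e: "(\<Sum>i<m*q. int i ^ k) = (\<Sum>a<m. \<Sum>j<q. int (j + a*q) ^ k)" .
  have c: "[(\<Sum>a<m. \<Sum>j<q. int (j + a*q) ^ k) = (\<Sum>a<m. \<Sum>j<q. int j ^ k)] (mod int q)"
  proof (intro cong_sum cong_pow)
    fix a j show "[int (j + a*q) = int j] (mod int q)"
      by (simp add: cong_iff_dvd_diff)
  qed
  show ?thesis using e c by simp
qed

lemma S_block:
  fixes q n :: nat
  assumes "q dvd n" "n > 0"
  shows "[S n n = int (n div q) * (\<Sum>j<q. int j ^ n)] (mod int q)"
proof -
  have "S n n = (\<Sum>i<n. int i ^ n) + int n ^ n"
  proof -
    have "{1..n} = {1..<n} \<union> {n}" using assms by auto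
    moreover have "(\<Sum>i<n. int i ^ n) = (\<Sum>i\<in>{1..<n}. int i ^ n)"
    proof -
      have "{..<n} = insert 0 {1..<n}" using assms by auto
      thus ?thesis using assms by simp
    qed
    ultimately show ?thesis unfolding S_def by simp
  qed
  moreover have "[int n ^ n = 0] (mod int q)"
    proof -
    have "int q dvd int n" using assms by simp
    moreover have "int n dvd int n ^ n" using assms by (simp add: dvd_power)
    ultimately show ?thesis unfolding cong_0_iff using dvd_trans by blast
  qed
  moreover have "[(\<Sum>i<n. int i ^ n) = int (n div q) * (\<Sum>j<q. int j ^ n)] (mod int q)"
    using block_sum[where m="n div q" and q=q and k=n] assms by simp
  ultimately show ?thesis
    using cong_add[of "(\<Sum>i<n. int i ^ n)" _ "int q" "int n ^ n" 0] by simp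
  
qed

lemma psum_dvd:
  fixes q k :: nat
  assumes q: "prime q" and d: "(q-1) dvd k" and k: "k > 0"
  shows "[(\<Sum>j<q. int j ^ k) = -1] (mod int q)"
proof -
  have q1: "q > 1" using q prime_gt_1_nat by blast
  have "{..<q} = insert 0 {1..<q}" using q1 by auto
  then have e: "(\<Sum>j<q. int j ^ k) = (\<Sum>j\<in>{1..<q}. int j ^ k)" using k by simp
  have c: "[(\<Sum>j\<in>{1..<q}. int j ^ k) = (\<Sum>j\<in>{1..<q}. 1)] (mod int q)"
  proof (rule cong_sum)
    fix j assume j: "j \<in> {1..<q}"
    then have "\<not> q dvd j" by (auto dest: dvd_imp_le)
    then have f: "[j ^ (q-1) = 1] (mod q)" using fermat_theorem q by blast
    obtain t where t: "k = (q-1)*t" using d by blast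
    have "[(j ^ (q-1)) ^ t = 1 ^ t] (mod q)" using f cong_pow by blast
    then have "[j ^ k = 1] (mod q)" by (simp add: t power_mult)
    then show "[int j ^ k = 1] (mod int q)"
      by (metis cong_int_iff of_nat_1 of_nat_power)
  qed
  have "(\<Sum>j\<in>{1..<q}. (1::int)) = int q - 1" using q1 by simp
  moreover have "[int q - 1 = -1] (mod int q)" by (simp add: cong_iff_dvd_diff)
  ultimately show ?thesis using e c cong_trans by metis
qed

lemma psum_ndvd:
  fixes q k :: nat
  assumes q: "prime q" and d: "\<not> (q-1) dvd k"
  shows "[(\<Sum>j<q. int j ^ k) = 0] (mod int q)"
proof -
  have q1: "q > 1" using q prime_gt_1_nat by blast
  obtain g where g: "residue_primroot q g" using prime_primitive_root_exists q q1 by blast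
  then have cop: "coprime q g" and og: "ord q g = q - 1"
    by (auto simp: residue_primroot_def totient_prime q)
  have ng: "\<not> [g ^ k = 1] (mod q)" using og d ord_divides by metis
  define f where "f j = g * j mod q" for j
  have inj: "inj_on f {..<q}"
  proof
    fix i j assume i: "i \<in> {..<q}" and j: "j \<in> {..<q}" and fe: "f i = f j"
    then have "[g * i = g * j] (mod q)" by (simp add: f_def cong_def)
    then have "[i = j] (mod q)" using cop
      by (metis cong_mult_lcancel_nat coprime_commute)
    then show "i = j" using i j by (simp add: cong_def)
  qed
  have sub: "f ` {..<q} \<subseteq> {..<q}" using q1 by (auto simp: f_def)
  have img: "f ` {..<q} = {..<q}" using endo_inj_surj[OF _ sub inj] by simp
  have "(\<Sum>j<q. int j ^ k) = (\<Sum>j\<in>f ` {..<q}. int j ^ k)" using img by simp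
  also have "\<dots> = (\<Sum>j<q. int (f j) ^ k)" using sum.reindex[OF inj] by simp
  finally have e1: "(\<Sum>j<q. int j ^ k) = (\<Sum>j<q. int (f j) ^ k)" .
  have c1: "[(\<Sum>j<q. int (f j) ^ k) = (\<Sum>j<q. (int g * int j) ^ k)] (mod int q)"
  proof (intro cong_sum cong_pow)
    fix j show "[int (f j) = int g * int j] (mod int q)"
      unfolding f_def by (metis cong_int_iff cong_mod_left cong_refl of_nat_mult)
  qed
  have e2: "(\<Sum>j<q. (int g * int j) ^ k) = int g ^ k * (\<Sum>j<q. int j ^ k)"
    by (simp add: power_mult_distrib sum_distrib_left)
  define T where "T = (\<Sum>j<q. int j ^ k)"
  have "[T = int g ^ k * T] (mod int q)" using e1 c1 e2 unfolding T_def by simp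
  then have dv: "int q dvd (int g ^ k - 1) * T"
    by (simp add: cong_iff_dvd_diff algebra_simps dvd_diff_commute)
  have "\<not> int q dvd (int g ^ k - 1)"
  proof
    assume "int q dvd (int g ^ k - 1)"
    then have "[int g ^ k = 1] (mod int q)" by (simp add: cong_iff_dvd_diff)
    then have "[g ^ k = 1] (mod q)" by (metis cong_int_iff of_nat_1 of_nat_power)
    then show False using ng by blast
  qed
  moreover have "prime (int q)" using q by simp
  ultimately have "int q dvd T" using dv prime_dvd_mult_iff by blast
  then show ?thesis unfolding T_def by (simp add: cong_0_iff)
qed

lemma np: "a * b = (n::nat) \<Longrightarrow> 1 < a \<Longrightarrow> 1 < b \<Longrightarrow> \<not> prime n"
  by (metis prime_product less_not_refl)
lemma divs_step:
  fixes r m d :: nat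
  assumes r: "prime r" and D: "\<forall>e. e dvd m \<longrightarrow> e \<in> D" and d: "d dvd r * m"
  shows "d \<in> D \<union> (\<lambda>x. r * x) ` D"
proof (cases "r dvd d")
  case True
  then obtain e where e: "d = r * e" by blast
  then have "e dvd m" using d r by (auto simp: prime_gt_0_nat)
  then show ?thesis using D e by blast
next
  case False
  then have "coprime r d" using r prime_imp_coprime by blast
  then have "d dvd m" using d by (metis coprime_commute coprime_dvd_mult_right_iff)
  then show ?thesis using D by blast
qed

lemma divs1: "\<forall>e. e dvd (1::nat) \<longrightarrow> e \<in> {1}" by simp
lemma divs2: "\<forall>e. e dvd (2::nat) \<longrightarrow> e \<in> {1,2}"
proof (intro allI impI)
  fix e :: nat assume "e dvd 2" then have "e dvd 2 * 1" by simp
  from divs_step[OF _ divs1 this] show "e \<in> {1,2}" by auto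
qed
lemma divs6: "\<forall>e. e dvd (6::nat) \<longrightarrow> e \<in> {1,2,3,6}"
proof (intro allI impI)
  fix e :: nat assume "e dvd 6" then have "e dvd 3 * 2" by simp
  from divs_step[OF _ divs2 this] show "e \<in> {1,2,3,6}" by auto
qed
lemma divs42: "\<forall>e. e dvd (42::nat) \<longrightarrow> e \<in> {1,2,3,6,7,14,21,42}"
proof (intro allI impI)
  fix e :: nat assume "e dvd 42" then have "e dvd 7 * 6" by simp
  from divs_step[OF _ divs6 this] show "e \<in> {1,2,3,6,7,14,21,42}" by auto
qed
lemma divs1806: "\<forall>e. e dvd (1806::nat) \<longrightarrow> e \<in> {1,2,3,6,7,14,21,42,43,86,129,258,301,602,903,1806}"
proof (intro allI impI)
  fix e :: nat assume "e dvd 1806" then have "e dvd 43 * 42" by simp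
  from divs_step[OF _ divs42 this] show "e \<in> {1,2,3,6,7,14,21,42,43,86,129,258,301,602,903,1806}" by auto
qed

lemma step:
  fixes q m :: nat
  assumes m: "m \<in> {1,2,6,42,1806}" and q: "prime q" and d: "(q-1) dvd m" and nd: "\<not> q dvd m"
  shows "m * q \<in> {1,2,6,42,1806}"
proof -
  have q1: "q > 1" using q prime_gt_1_nat by blast
  define d where "d = q - 1"
  have qd: "q = d + 1" using q1 d_def by simp
  have n4: "\<not> prime (4::nat)" by (rule np[of 2 2]) simp_all
  have n8: "\<not> prime (8::nat)" by (rule np[of 2 4]) simp_all
  have n15: "\<not> prime (15::nat)" by (rule np[of 3 5]) simp_all
  have n22: "\<not> prime (22::nat)" by (rule np[of 2 11]) simp_all
  have n44: "\<not> prime (44::nat)" by (rule np[of 2 22]) simp_all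
  have n87: "\<not> prime (87::nat)" by (rule np[of 3 29]) simp_all
  have n130: "\<not> prime (130::nat)" by (rule np[of 2 65]) simp_all
  have n259: "\<not> prime (259::nat)" by (rule np[of 7 37]) simp_all
  have n302: "\<not> prime (302::nat)" by (rule np[of 2 151]) simp_all
  have n603: "\<not> prime (603::nat)" by (rule np[of 3 201]) simp_all
  have n904: "\<not> prime (904::nat)" by (rule np[of 2 452]) simp_all
  have n1807: "\<not> prime (1807::nat)" by (rule np[of 13 139]) simp_all
  note n4 = n4 n8 n15 n22 n44 n87 n130 n259 n302 n603 n904 n1807
  have qc: "q \<noteq> 4" "q \<noteq> 8" "q \<noteq> 15" "q \<noteq> 22" "q \<noteq> 44" "q \<noteq> 87" "q \<noteq> 130" "q \<noteq> 259" "q \<noteq> 302" "q \<noteq> 603" "q \<noteq> 904" "q \<noteq> 1807" using q n4 by blast+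
  have dm: "d dvd m" using d d_def by simp
  have q0: "q \<noteq> 1" using q1 by simp
  from m consider "m = 1" | "m = 2" | "m = 6" | "m = 42" | "m = 1806" by blast
  then show ?thesis
  proof cases
    case 1
    then have "d \<in> {1}" using divs1 dm by blast
    then have "q \<in> {2}" using qd by simp
    then show ?thesis
      apply (elim insertE)
      using nd qc 1 apply simp_all
      done
  next
    case 2
    then have "d \<in> {1,2}" using divs2 dm by blast
    then have "q \<in> {2,3}" using qd by simp
    then show ?thesis
      apply (elim insertE)
      using nd qc 2 apply simp_all
      done
  next
    case 3
    then have "d \<in> {1,2,3,6}" using divs6 dm by blast
    then have "q \<in> {2,3,4,7}" using qd by simp
    then show ?thesis
      apply (elim insertE)
      using nd qc 3 apply simp_all
      done
  next
    case 4
    then have "d \<in> {1,2,3,6,7,14,21,42}" using divs42 dm by blast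
    then have "q \<in> {2,3,4,7,8,15,22,43}" using qd by simp
    then show ?thesis
      apply (elim insertE)
      using nd qc 4 apply simp_all
      done
  next
    case 5
    then have "d \<in> {1,2,3,6,7,14,21,42,43,86,129,258,301,602,903,1806}" using divs1806 dm by blast
    then have "q \<in> {2,3,4,7,8,15,22,43,44,87,130,259,302,603,904,1807}" using qd by simp
    then show ?thesis
      apply (elim insertE)
      using nd qc 5 apply simp_all
      done
  qed
qed

lemma cop_small: "prime (q::nat) \<Longrightarrow> 0 < a \<Longrightarrow> a < q \<Longrightarrow> coprime a q"
  by (metis coprime_commute dvd_imp_le not_le prime_imp_coprime)

lemma classify:
  fixes n :: nat
  shows
  "0 < n \<Longrightarrow> (\<forall>q. prime q \<longrightarrow> q dvd n \<longrightarrow> (q-1) dvd n \<and> \<not> q dvd (n div q))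
   \<Longrightarrow> n \<in> {1,2,6,42,1806}"
proof (induction n rule: less_induct)
  case (less n)
  show ?case
  proof (cases "n = 1")
    case True thus ?thesis by simp
  next
    case False
    then obtain p where p: "prime p" "p dvd n" using prime_factor_nat by blast
    have "p \<in> prime_factors n" using p less.prems(1) by (simp add: in_prime_factors_iff)
    then have pf: "prime_factors n \<noteq> {}" by blast
    define q where "q = Max (prime_factors n)"
    have qin: "q \<in> prime_factors n" unfolding q_def using pf by (intro Max_in) auto
    then have qp: "prime q" and qd: "q dvd n" by (auto simp: in_prime_factors_iff)
    have qmax: "r \<le> q" if "prime r" "r dvd n" for r
      unfolding q_def using that less.prems(1) by (intro Max_ge) (auto simp: in_prime_factors_iff)
    define m where "m = n div q"
    have q1: "q > 1" using qp prime_gt_1_nat by blast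
    have nm: "n = m * q" using qd m_def by simp
    have qm1: "(q-1) dvd n" and nqm: "\<not> q dvd m" using less.prems(2) qp qd m_def by auto
    have m0: "m > 0" using less.prems(1) nm by (cases "m = 0") auto
    have mn: "m < n" using nm q1 m0 by simp
    have Qm: "\<forall>r. prime r \<longrightarrow> r dvd m \<longrightarrow> (r-1) dvd m \<and> \<not> r dvd (m div r)"
    proof (intro allI impI)
      fix r assume r: "prime r" "r dvd m"
      have rn: "r dvd n" using r nm by simp
      have "r \<noteq> q" using r nqm by blast
      then have rq: "r < q" using qmax[OF r(1) rn] by simp
      have r1: "r > 1" using r prime_gt_1_nat by blast
      have "(r-1) dvd n" using less.prems(2) r(1) rn by blast
      then have "(r-1) dvd m * q" using nm by simp
      moreover have "coprime (r-1) q" using cop_small[OF qp] r1 rq by simp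
      ultimately have A: "(r-1) dvd m" by (metis coprime_dvd_mult_left_iff)
      have e: "n div r = (m div r) * q" using r(2) by (simp add: nm dvd_div_mult)
      have nr: "\<not> r dvd (n div r)" using less.prems(2) r(1) rn by blast
      have B: "\<not> r dvd (m div r)"
      proof
        assume "r dvd (m div r)"
        then have "r dvd (m div r) * q" by simp
        then show False using nr e by simp
      qed
      show "(r-1) dvd m \<and> \<not> r dvd (m div r)" using A B by blast
    qed
    have mset: "m \<in> {1,2,6,42,1806}" using less.IH[OF mn m0 Qm] .
    have "coprime (q-1) q" using cop_small[OF qp] q1 by simp
    then have "(q-1) dvd m" using qm1 nm by (metis coprime_dvd_mult_left_iff)
    then have "m * q \<in> {1,2,6,42,1806}" using step[OF mset qp _ nqm] by blast
    then show ?thesis using nm by simp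
  qed
qed

lemma S_mod:
  fixes q n :: nat
  assumes q: "prime q" and d: "q dvd n" and n: "n > 0"
  shows "[S n n = (if (q-1) dvd n then - int (n div q) else 0)] (mod int q)"
proof -
  have b: "[S n n = int (n div q) * (\<Sum>j<q. int j ^ n)] (mod int q)" using S_block[OF d n] .
  show ?thesis
  proof (cases "(q-1) dvd n")
    case True
    have "[int (n div q) * (\<Sum>j<q. int j ^ n) = int (n div q) * (-1)] (mod int q)"
      using psum_dvd[OF q True n] by (intro cong_mult cong_refl)
    then show ?thesis using b True by (simp add: cong_trans)
  next
    case False
    have "[int (n div q) * (\<Sum>j<q. int j ^ n) = int (n div q) * 0] (mod int q)"
      using psum_ndvd[OF q False] by (intro cong_mult cong_refl)
    then show ?thesis using b False by (simp add: cong_trans)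
  qed
qed

lemma crt_int:
  fixes x :: int and m q :: nat
  assumes "[x = 1] (mod int m)" "[x = 1] (mod int q)" "prime q" "\<not> q dvd m"
  shows "[x = 1] (mod int (m*q))"
proof -
  have "coprime q m" using assms prime_imp_coprime by blast
  then have "coprime (int m) (int q)" by (simp add: coprime_commute)
  then show ?thesis using coprime_cong_mult[of x 1 "int m" "int q"] assms by simp
qed

lemma fin:
  fixes x :: int and n :: nat
  assumes n: "n \<in> {1,2,6,42,1806}"
    and h: "\<And>q. q \<in> {2,3,7,43} \<Longrightarrow> q dvd n \<Longrightarrow> [x = 1] (mod int q)"
  shows "[x = 1] (mod int n)"
proof -
  have h2: "n \<in> {2,6,42,1806} \<Longrightarrow> [x = 1] (mod int 2)" using h[of 2] by auto
  have h3: "n \<in> {6,42,1806} \<Longrightarrow> [x = 1] (mod int 3)" using h[of 3] by auto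
  have h7: "n \<in> {42,1806} \<Longrightarrow> [x = 1] (mod int 7)" using h[of 7] by auto
  have h43: "n = 1806 \<Longrightarrow> [x = 1] (mod int 43)" using h[of 43] by auto
  have c6: "n \<in> {6,42,1806} \<Longrightarrow> [x = 1] (mod int 6)"
    using crt_int[of x 2 3] h2 h3 by auto
  have c42: "n \<in> {42,1806} \<Longrightarrow> [x = 1] (mod int 42)"
    using crt_int[of x 6 7] c6 h7 by auto
  have c1806: "n = 1806 \<Longrightarrow> [x = 1] (mod int 1806)"
    using crt_int[of x 42 43] c42 h43 by auto
  show ?thesis using n h2 c6 c42 c1806 by auto
qed

lemma numcheck:
  fixes n q :: nat
  assumes "n \<in> {1,2,6,42,1806}" "q \<in> {2,3,7,43}" "q dvd n"
  shows "[- int (n div q) = 1] (mod int q)"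
  using assms by (auto simp: cong_def)

lemma numcheck2:
  fixes n q :: nat
  assumes "n \<in> {1,2,6,42,1806}" "q \<in> {2,3,7,43}" "q dvd n"
  shows "(q - 1) dvd n"
  using assms by auto

lemma primes4: "q \<in> {2,3,7,43} \<Longrightarrow> prime (q::nat)"
  apply (elim insertE)
     apply simp_all
  done

theorem mainTheorem3:
  fixes p :: nat
  assumes "prime p"
  shows "M0 p = {n \<in> {1, 2, 6, 42, 1806}. [p = 1] (mod n)}"
proof (intro Set.set_eqI iffI)
  fix n assume "n \<in> M0 p"
  then have n0: "n > 0" and c: "[S n n = int p] (mod int n)" and np: "\<not> p dvd n"
    by (simp_all add: M0_def M_def)
  have key: "(q-1) dvd n \<and> [- int (n div q) = int p] (mod int q) \<and> \<not> q dvd (n div q)"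
    if q: "prime q" and qd: "q dvd n" for q
  proof -
    have "int q dvd int n" using qd by simp
    then have cq: "[S n n = int p] (mod int q)" by (rule cong_dvd_modulus[OF c])
    have nqp: "\<not> int q dvd int p"
    proof
      assume "int q dvd int p"
      then have "q dvd p" by simp
      then have "q = p" using q assms primes_dvd_imp_eq by blast
      then show False using np qd by simp
    qed
    have sm: "[S n n = (if (q-1) dvd n then - int (n div q) else 0)] (mod int q)"
      using S_mod[OF q qd n0] .
    have dv: "(q-1) dvd n"
    proof (rule ccontr)
      assume "\<not> (q-1) dvd n"
      then have "[S n n = 0] (mod int q)" using sm by simp
      then have "[int p = 0] (mod int q)" by (rule cong_trans[OF cong_sym[OF cq]])
      then show False using nqp by (simp add: cong_0_iff)
    qed
    then have "[S n n = - int (n div q)] (mod int q)" using sm by simp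
    then have T: "[- int (n div q) = int p] (mod int q)" by (rule cong_trans[OF cong_sym cq])
    have "\<not> q dvd (n div q)"
    proof
      assume "q dvd (n div q)"
      then have "int q dvd int (n div q)" by simp
      then have "[- int (n div q) = 0] (mod int q)" by (simp add: cong_0_iff)
      then have "[int p = 0] (mod int q)" by (rule cong_trans[OF cong_sym[OF T]])
      then show False using nqp by (simp add: cong_0_iff)
    qed
    then show ?thesis using dv T by blast
  qed
  have kk: "\<forall>q. prime q \<longrightarrow> q dvd n \<longrightarrow> (q-1) dvd n \<and> \<not> q dvd (n div q)"
    using key by blast
  have ns: "n \<in> {1,2,6,42,1806}" by (rule classify[OF n0 kk])
  have "[int p = 1] (mod int n)"
  proof (rule fin[OF ns])
    fix q :: nat assume q: "q \<in> {2,3,7,43}" "q dvd n"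
    have "prime q" using primes4[OF q(1)] .
    then have "[- int (n div q) = int p] (mod int q)" using key q(2) by blast
    moreover have "[- int (n div q) = 1] (mod int q)" using numcheck[OF ns q] .
    ultimately show "[int p = 1] (mod int q)" by (rule cong_trans[OF cong_sym])
  qed
  then have "[p = 1] (mod n)" using cong_int_iff[of p 1 n] by simp
  then show "n \<in> {n \<in> {1, 2, 6, 42, 1806}. [p = 1] (mod n)}" using ns by blast
next
  fix n assume "n \<in> {n \<in> {1, 2, 6, 42, 1806}. [p = 1] (mod n)}"
  then have ns: "n \<in> {1,2,6,42,1806}" and pc: "[p = 1] (mod n)" by auto
  have n0: "n > 0" using ns by auto
  have p1: "p > 1" using assms prime_gt_1_nat by blast
  have np: "\<not> p dvd n"
  proof
    assume "p dvd n"
    then have "[p = 1] (mod p)" by (rule cong_dvd_modulus_nat[OF pc])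
    then show False using p1 by (simp add: cong_def)
  qed
  have "[S n n = 1] (mod int n)"
  proof (rule fin[OF ns])
    fix q :: nat assume q: "q \<in> {2,3,7,43}" "q dvd n"
    have qp: "prime q" using primes4[OF q(1)] .
    have "(q-1) dvd n" using numcheck2[OF ns q] .
    then have "[S n n = - int (n div q)] (mod int q)" using S_mod[OF qp q(2) n0] by simp
    moreover have "[- int (n div q) = 1] (mod int q)" using numcheck[OF ns q] .
    ultimately show "[S n n = 1] (mod int q)" by (rule cong_trans)
  qed
  moreover have "[int p = 1] (mod int n)" using pc cong_int_iff[of p 1 n] by simp
  ultimately have "[S n n = int p] (mod int n)" by (rule cong_trans[OF _ cong_sym])
  then show "n \<in> M0 p" using n0 np by (simp add: M0_def M_def)
qed

end
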